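(* Let $M$ be a centrally endo-AIP right $R$-module and $S=\mathrm{End}_R(M)$. If $S$ has finite right uniform dimension, then $S$ is a quasi-Baer ring.
   Context: For $N\le M$, $l_S(N)=\{\phi\in S:\phi(N)=0\}$. An ideal $I$ of $S$ is centrally s-unital if for every $a\in I$ there is $z\in I$ central in $S$ with $az=a$. $M$ is centrally endo-AIP if $l_S(N)$ is a centrally s-unital ideal of $S$ for every fully invariant submodule $N$ of $M$. $S$ has finite right uniform dimension if $S_S$ contains an essential submodule that is a direct sum of finitely many uniform submodules. A ring is quasi-Baer if the right annihilator of every ideal is generated, as a right ideal, by an idempotent. *)

theory Defs
  imports "HOL-Algebra.Ideal" "HOL-Algebra.FiniteProduct"
begin

text \<open>A right R-module: the underlying abelian group is the type 'm, the ring R is the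
type 'r, and act x r is the right scalar multiplication x r.\<close>

definition right_module :: "('m::ab_group_add \<Rightarrow> 'r::ring_1 \<Rightarrow> 'm) \<Rightarrow> bool" where
  "right_module act \<longleftrightarrow>
     (\<forall>x y r. act (x + y) r = act x r + act y r) \<and>
     (\<forall>x r s. act x (r + s) = act x r + act x s) \<and>
     (\<forall>x r s. act x (r * s) = act (act x r) s) \<and>
     (\<forall>x. act x 1 = x)"

definition End_set :: "('m::ab_group_add \<Rightarrow> 'r::ring_1 \<Rightarrow> 'm) \<Rightarrow> ('m \<Rightarrow> 'm) set" where
  "End_set act = {f. (\<forall>x y. f (x + y) = f x + f y) \<and> (\<forall>x r. f (act x r) = act (f x) r)}"

definition End_ring :: "('m::ab_group_add \<Rightarrow> 'r::ring_1 \<Rightarrow> 'm) \<Rightarrow> ('m \<Rightarrow> 'm) ring" where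
  "End_ring act = \<lparr>carrier = End_set act, monoid.mult = (\<lambda>f g. f \<circ> g), one = id,
                   zero = (\<lambda>x. 0), add = (\<lambda>f g x. f x + g x)\<rparr>"

definition submodule_of :: "('m::ab_group_add \<Rightarrow> 'r::ring_1 \<Rightarrow> 'm) \<Rightarrow> 'm set \<Rightarrow> bool" where
  "submodule_of act N \<longleftrightarrow> 0 \<in> N \<and> (\<forall>x\<in>N. \<forall>y\<in>N. x + y \<in> N) \<and> (\<forall>x\<in>N. - x \<in> N)
      \<and> (\<forall>x\<in>N. \<forall>r. act x r \<in> N)"

definition fully_invariant :: "('m::ab_group_add \<Rightarrow> 'r::ring_1 \<Rightarrow> 'm) \<Rightarrow> 'm set \<Rightarrow> bool" where
  "fully_invariant act N \<longleftrightarrow> submodule_of act N \<and> (\<forall>f\<in>End_set act. \<forall>x\<in>N. f x \<in> N)"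

definition l_ann :: "('m::ab_group_add \<Rightarrow> 'r::ring_1 \<Rightarrow> 'm) \<Rightarrow> 'm set \<Rightarrow> ('m \<Rightarrow> 'm) set" where
  "l_ann act N = {\<phi> \<in> End_set act. \<forall>x\<in>N. \<phi> x = 0}"

definition central :: "('a, 'b) ring_scheme \<Rightarrow> 'a \<Rightarrow> bool" where
  "central R z \<longleftrightarrow> z \<in> carrier R \<and> (\<forall>s\<in>carrier R. z \<otimes>\<^bsub>R\<^esub> s = s \<otimes>\<^bsub>R\<^esub> z)"

definition centrally_s_unital :: "('a, 'b) ring_scheme \<Rightarrow> 'a set \<Rightarrow> bool" where
  "centrally_s_unital R I \<longleftrightarrow> ideal I R \<and>
     (\<forall>a\<in>I. \<exists>z\<in>I. central R z \<and> a \<otimes>\<^bsub>R\<^esub> z = a)"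

definition centrally_endo_AIP :: "('m::ab_group_add \<Rightarrow> 'r::ring_1 \<Rightarrow> 'm) \<Rightarrow> bool" where
  "centrally_endo_AIP act \<longleftrightarrow>
     (\<forall>N. fully_invariant act N \<longrightarrow> centrally_s_unital (End_ring act) (l_ann act N))"

definition right_ideal :: "('a, 'b) ring_scheme \<Rightarrow> 'a set \<Rightarrow> bool" where
  "right_ideal R I \<longleftrightarrow> additive_subgroup I R \<and> (\<forall>a\<in>I. \<forall>s\<in>carrier R. a \<otimes>\<^bsub>R\<^esub> s \<in> I)"

definition essential_right_ideal :: "('a, 'b) ring_scheme \<Rightarrow> 'a set \<Rightarrow> bool" where
  "essential_right_ideal R K \<longleftrightarrow> right_ideal R K \<and>
     (\<forall>A. right_ideal R A \<and> A \<noteq> {\<zero>\<^bsub>R\<^esub>} \<longrightarrow> A \<inter> K \<noteq> {\<zero>\<^bsub>R\<^esub>})"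

definition uniform_right_ideal :: "('a, 'b) ring_scheme \<Rightarrow> 'a set \<Rightarrow> bool" where
  "uniform_right_ideal R U \<longleftrightarrow> right_ideal R U \<and> U \<noteq> {\<zero>\<^bsub>R\<^esub>} \<and>
     (\<forall>A B. right_ideal R A \<and> right_ideal R B \<and> A \<subseteq> U \<and> B \<subseteq> U \<and>
            A \<noteq> {\<zero>\<^bsub>R\<^esub>} \<and> B \<noteq> {\<zero>\<^bsub>R\<^esub>} \<longrightarrow> A \<inter> B \<noteq> {\<zero>\<^bsub>R\<^esub>})"

definition internal_sum :: "('a, 'b) ring_scheme \<Rightarrow> (nat \<Rightarrow> 'a set) \<Rightarrow> nat \<Rightarrow> 'a set" where
  "internal_sum R U n = {finsum R u {..<n} | u. u \<in> Pi {..<n} U}"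

definition independent_family :: "('a, 'b) ring_scheme \<Rightarrow> (nat \<Rightarrow> 'a set) \<Rightarrow> nat \<Rightarrow> bool" where
  "independent_family R U n \<longleftrightarrow>
     (\<forall>u \<in> Pi {..<n} U. finsum R u {..<n} = \<zero>\<^bsub>R\<^esub> \<longrightarrow> (\<forall>i<n. u i = \<zero>\<^bsub>R\<^esub>))"

definition finite_right_uniform_dimension :: "('a, 'b) ring_scheme \<Rightarrow> bool" where
  "finite_right_uniform_dimension R \<longleftrightarrow>
     (\<exists>n U. (\<forall>i<n. uniform_right_ideal R (U i)) \<and> independent_family R U n \<and>
            essential_right_ideal R (internal_sum R U n))"

definition r_ann :: "('a, 'b) ring_scheme \<Rightarrow> 'a set \<Rightarrow> 'a set" where
  "r_ann R I = {s \<in> carrier R. \<forall>a\<in>I. a \<otimes>\<^bsub>R\<^esub> s = \<zero>\<^bsub>R\<^esub>}"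

definition quasi_Baer :: "('a, 'b) ring_scheme \<Rightarrow> bool" where
  "quasi_Baer R \<longleftrightarrow>
     (\<forall>I. ideal I R \<longrightarrow>
        (\<exists>e\<in>carrier R. e \<otimes>\<^bsub>R\<^esub> e = e \<and> r_ann R I = {e \<otimes>\<^bsub>R\<^esub> s | s. s \<in> carrier R}))"

end

theory Submission
  imports Defs
begin


definition lann :: "('a, 'b) ring_scheme \<Rightarrow> 'a set \<Rightarrow> 'a set" where
  "lann R J = {x \<in> carrier R. \<forall>b\<in>J. x \<otimes>\<^bsub>R\<^esub> b = \<zero>\<^bsub>R\<^esub>}"

context ring begin

lemma l_diff: "a \<in> carrier R \<Longrightarrow> b \<in> carrier R \<Longrightarrow> c \<in> carrier R \<Longrightarrow> (a \<ominus> b) \<otimes> c = a \<otimes> c \<ominus> b \<otimes> c"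
  by (simp add: minus_eq l_distr l_minus)
lemma r_diff: "a \<in> carrier R \<Longrightarrow> b \<in> carrier R \<Longrightarrow> c \<in> carrier R \<Longrightarrow> c \<otimes> (a \<ominus> b) = c \<otimes> a \<ominus> c \<otimes> b"
  by (simp add: minus_eq r_distr r_minus)
lemma add_diff_cancel': "a \<in> carrier R \<Longrightarrow> b \<in> carrier R \<Longrightarrow> b \<oplus> (a \<ominus> b) = a"
  by (metis a_comm a_minus_def add.inv_closed add.m_lcomm minus_closed r_neg1)
lemma diff_self: "a \<in> carrier R \<Longrightarrow> a \<ominus> a = \<zero>"
  by (simp add: minus_eq r_neg)

lemma central_carrier: "central R z \<Longrightarrow> z \<in> carrier R"
  unfolding central_def by blast
lemma central_comm: "central R z \<Longrightarrow> s \<in> carrier R \<Longrightarrow> z \<otimes> s = s \<otimes> z"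
  unfolding central_def by blast
lemma central_zero: "central R \<zero>"
  unfolding central_def by simp
lemma central_add: "central R a \<Longrightarrow> central R b \<Longrightarrow> central R (a \<oplus> b)"
  unfolding central_def by (simp add: l_distr r_distr)
lemma central_minus: "central R a \<Longrightarrow> central R b \<Longrightarrow> central R (a \<ominus> b)"
  unfolding central_def by (simp add: l_diff r_diff)
lemma central_mult: "central R a \<Longrightarrow> central R b \<Longrightarrow> central R (a \<otimes> b)"
  unfolding central_def by (metis m_assoc m_closed)

lemma cs_ideal: "centrally_s_unital R X \<Longrightarrow> ideal X R"
  unfolding centrally_s_unital_def by blast
lemma cs_unit: "centrally_s_unital R X \<Longrightarrow> a \<in> X \<Longrightarrow> \<exists>z\<in>X. central R z \<and> a \<otimes> z = a"
  unfolding centrally_s_unital_def by blast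

lemma cs_finite:
  assumes cs: "centrally_s_unital R X" and "finite F" "F \<subseteq> X"
  shows "\<exists>z\<in>X. central R z \<and> (\<forall>a\<in>F. a \<otimes> z = a)"
  using assms(2,3)
proof (induction F rule: finite_induct)
  case empty
  interpret I: ideal X R by (rule cs_ideal[OF cs])
  show ?case using central_zero I.zero_closed by blast
next
  case (insert a F)
  interpret I: ideal X R by (rule cs_ideal[OF cs])
  from insert obtain z1 where z1: "z1 \<in> X" "central R z1" "\<forall>b\<in>F. b \<otimes> z1 = b" by auto
  have a: "a \<in> X" "a \<in> carrier R" using insert I.Icarr by auto
  have z1c: "z1 \<in> carrier R" using z1 central_carrier by auto
  define v where "v = a \<ominus> a \<otimes> z1"
  have vX: "v \<in> X" unfolding v_def minus_eq using a z1 z1c I.I_r_closed by auto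
  obtain w where w: "w \<in> X" "central R w" "v \<otimes> w = v" using cs_unit[OF cs vX] by blast
  have wc: "w \<in> carrier R" using w central_carrier by auto
  define z where "z = z1 \<oplus> (w \<ominus> z1 \<otimes> w)"
  have zX: "z \<in> X" unfolding z_def minus_eq using z1 w z1c I.I_r_closed by auto
  have zcen: "central R z" unfolding z_def using z1 w central_add central_minus central_mult by auto
  have "a \<otimes> z = a"
  proof -
    have "a \<otimes> z = a \<otimes> z1 \<oplus> (a \<otimes> w \<ominus> (a \<otimes> z1) \<otimes> w)"
      unfolding z_def using a z1c wc by (simp add: r_distr r_diff m_assoc)
    also have "a \<otimes> w \<ominus> (a \<otimes> z1) \<otimes> w = v \<otimes> w"
      unfolding v_def using a z1c wc by (simp add: l_diff)
    also have "\<dots> = a \<ominus> a \<otimes> z1" using w v_def by simp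
    finally show ?thesis using add_diff_cancel' a z1c by simp
  qed
  moreover have "b \<otimes> z = b" if b: "b \<in> F" for b
  proof -
    have bc: "b \<in> carrier R" using b insert I.Icarr by auto
    have "b \<otimes> z = b \<otimes> z1 \<oplus> (b \<otimes> w \<ominus> (b \<otimes> z1) \<otimes> w)"
      unfolding z_def using bc z1c wc by (simp add: r_distr r_diff m_assoc)
    then show ?thesis using z1 b bc wc by (simp add: diff_self)
  qed
  ultimately show ?case using zX zcen by blast
qed

lemma addsub_helper:
  assumes "H \<subseteq> carrier R" "\<zero> \<in> H" "\<And>a. a \<in> H \<Longrightarrow> \<ominus> a \<in> H" "\<And>a b. a \<in> H \<Longrightarrow> b \<in> H \<Longrightarrow> a \<oplus> b \<in> H"
  shows "additive_subgroup H R"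
  apply (rule additive_subgroupI)
  apply (rule add.subgroupI)
  using assms by (auto simp: a_inv_def[symmetric])

lemma principal_right_ideal:
  assumes "a \<in> carrier R"
  shows "right_ideal R {a \<otimes> s | s. s \<in> carrier R}"
  unfolding right_ideal_def
proof
  show "additive_subgroup {a \<otimes> s | s. s \<in> carrier R} R"
  proof (rule addsub_helper)
    show "{a \<otimes> s | s. s \<in> carrier R} \<subseteq> carrier R" using assms by auto
    show "\<zero> \<in> {a \<otimes> s | s. s \<in> carrier R}" using assms by (auto intro!: exI[of _ \<zero>])
    show "\<ominus> x \<in> {a \<otimes> s | s. s \<in> carrier R}" if "x \<in> {a \<otimes> s | s. s \<in> carrier R}" for x
    proof -
      have "\<exists>t. t \<in> carrier R \<and> x = a \<otimes> t" using that apply simp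
        apply (elim exE conjE) apply (rule exI, rule conjI, assumption) apply assumption done
      then obtain t where t: "t \<in> carrier R" "x = a \<otimes> t" by blast
      then have "\<ominus> x = a \<otimes> (\<ominus> t)" using assms by (simp add: r_minus)
      then show ?thesis using t by auto
    qed
    show "x \<oplus> y \<in> {a \<otimes> s | s. s \<in> carrier R}" if "x \<in> {a \<otimes> s | s. s \<in> carrier R}"
       "y \<in> {a \<otimes> s | s. s \<in> carrier R}" for x y
    proof -
      have "\<exists>t. t \<in> carrier R \<and> x = a \<otimes> t" using that(1) apply simp
        apply (elim exE conjE) apply (rule exI, rule conjI, assumption) apply assumption done
      then obtain t where t: "t \<in> carrier R" "x = a \<otimes> t" by blast
      have "\<exists>t. t \<in> carrier R \<and> y = a \<otimes> t" using that(2) apply simp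
        apply (elim exE conjE) apply (rule exI, rule conjI, assumption) apply assumption done
      then obtain t' where t': "t' \<in> carrier R" "y = a \<otimes> t'" by blast
      have "x \<oplus> y = a \<otimes> (t \<oplus> t')" using t t' assms by (simp add: r_distr)
      then show ?thesis using t t' by auto
    qed
  qed
  show "\<forall>x\<in>{a \<otimes> s | s. s \<in> carrier R}. \<forall>s\<in>carrier R. x \<otimes> s \<in> {a \<otimes> s | s. s \<in> carrier R}"
  proof (intro ballI)
    fix x s assume x: "x \<in> {a \<otimes> s | s. s \<in> carrier R}" and s: "s \<in> carrier R"
    have "\<exists>t. t \<in> carrier R \<and> x = a \<otimes> t" using x apply simp
      apply (elim exE conjE) apply (rule exI, rule conjI, assumption) apply assumption done
    then obtain t where t: "t \<in> carrier R" "x = a \<otimes> t" by blast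
    have "x \<otimes> s = a \<otimes> (t \<otimes> s)" using t s assms by (simp add: m_assoc)
    then show "x \<otimes> s \<in> {a \<otimes> s | s. s \<in> carrier R}" using t s by auto
  qed
qed

lemma central_principal_ideal:
  assumes "central R d"
  shows "ideal {d \<otimes> s | s. s \<in> carrier R} R"
proof -
  have dc: "d \<in> carrier R" using assms central_carrier by auto
  have ri: "right_ideal R {d \<otimes> s | s. s \<in> carrier R}" by (rule principal_right_ideal[OF dc])
  show ?thesis
  proof (rule idealI)
    show "ring R" by (rule ring_axioms)
    show "subgroup {d \<otimes> s | s. s \<in> carrier R} (add_monoid R)"
      using ri unfolding right_ideal_def additive_subgroup_def by blast
    show "x \<otimes> a \<in> {d \<otimes> s | s. s \<in> carrier R}" if "a \<in> {d \<otimes> s | s. s \<in> carrier R}" "x \<in> carrier R" for a x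
    proof -
      have "\<exists>s. s \<in> carrier R \<and> a = d \<otimes> s" using that(1) apply simp
        apply (elim exE conjE) apply (rule exI, rule conjI, assumption) apply assumption done
      then obtain s where s: "s \<in> carrier R" "a = d \<otimes> s" by blast
      have "x \<otimes> a = (x \<otimes> d) \<otimes> s" using s that dc by (simp add: m_assoc)
      also have "\<dots> = (d \<otimes> x) \<otimes> s" using central_comm[OF assms, of x] that by simp
      also have "\<dots> = d \<otimes> (x \<otimes> s)" using s that dc by (simp add: m_assoc)
      finally have "x \<otimes> a = d \<otimes> (x \<otimes> s)" .
      then show ?thesis using s that by auto
    qed
    show "a \<otimes> x \<in> {d \<otimes> s | s. s \<in> carrier R}" if "a \<in> {d \<otimes> s | s. s \<in> carrier R}" "x \<in> carrier R" for a x
      using ri that unfolding right_ideal_def by blast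
  qed
qed

lemma r_ann_ideal:
  assumes I: "ideal I R"
  shows "ideal (r_ann R I) R"
proof -
  interpret I: ideal I R by fact
  show ?thesis
  proof (rule idealI)
    show "ring R" by (rule ring_axioms)
    have "additive_subgroup (r_ann R I) R"
    proof (rule addsub_helper)
      show "r_ann R I \<subseteq> carrier R" unfolding r_ann_def by auto
      show "\<zero> \<in> r_ann R I" unfolding r_ann_def using I.Icarr by auto
      show "\<ominus> x \<in> r_ann R I" if "x \<in> r_ann R I" for x
        using that I.Icarr unfolding r_ann_def by (auto simp: r_minus)
      show "x \<oplus> y \<in> r_ann R I" if "x \<in> r_ann R I" "y \<in> r_ann R I" for x y
        using that I.Icarr unfolding r_ann_def by (auto simp: r_distr)
    qed
    then show "subgroup (r_ann R I) (add_monoid R)" unfolding additive_subgroup_def by blast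
    show "x \<otimes> a \<in> r_ann R I" if "a \<in> r_ann R I" "x \<in> carrier R" for a x
      using that I.Icarr I.I_r_closed unfolding r_ann_def by (auto simp: m_assoc[symmetric])
    show "a \<otimes> x \<in> r_ann R I" if "a \<in> r_ann R I" "x \<in> carrier R" for a x
      using that I.Icarr unfolding r_ann_def by (auto simp: m_assoc[symmetric])
  qed
qed

lemma cs_lann_disj:
  assumes "centrally_s_unital R B" "x \<in> B" "x \<in> lann R B"
  shows "x = \<zero>"
  using cs_unit[OF assms(1,2)] assms(3) unfolding lann_def by auto

lemma kl:
  assumes cs: "centrally_s_unital R X"
    and E: "essential_right_ideal R (internal_sum R U n)"
    and U: "\<forall>i<n. right_ideal R (U i)"
    and disj: "\<forall>i<n. X \<inter> U i \<subseteq> {\<zero>}"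
  shows "X \<subseteq> {\<zero>}"
proof (rule ccontr)
  interpret I: ideal X R by (rule cs_ideal[OF cs])
  assume "\<not> X \<subseteq> {\<zero>}"
  then have nz: "X \<noteq> {\<zero>}" by auto
  have rX: "right_ideal R X" unfolding right_ideal_def using I.is_additive_subgroup I.I_r_closed by auto
  have Uc: "U i \<subseteq> carrier R" if "i < n" for i
    using U that unfolding right_ideal_def using additive_subgroup.a_subset by blast
  have ne: "X \<inter> internal_sum R U n \<noteq> {\<zero>}" using E rX nz unfolding essential_right_ideal_def by auto
  have all0: "x = \<zero>" if x: "x \<in> X" "x \<in> internal_sum R U n" for x
  proof -
    obtain u where u: "u \<in> Pi {..<n} U" "x = finsum R u {..<n}"
      using x(2) unfolding internal_sum_def by auto
    have uc: "u \<in> {..<n} \<rightarrow> carrier R" using u(1) Uc by auto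
    obtain w where w: "w \<in> X" "central R w" "x \<otimes> w = x" using cs_unit[OF cs x(1)] by blast
    have wc: "w \<in> carrier R" using w central_carrier by auto
    have "x \<otimes> w = (\<Oplus>i\<in>{..<n}. u i \<otimes> w)" by (simp add: u(2) finsum_ldistr[OF _ wc uc])
    also have "\<dots> = (\<Oplus>i\<in>{..<n}. \<zero>)"
    proof (rule finsum_cong')
      show "u i \<otimes> w = \<zero>" if "i \<in> {..<n}" for i
      proof -
        have "u i \<otimes> w \<in> U i" using U that u(1) wc unfolding right_ideal_def by auto
        moreover have "u i \<otimes> w \<in> X" using I.I_l_closed w(1) uc that by auto
        ultimately show ?thesis using disj that by auto
      qed
    qed auto
    also have "\<dots> = \<zero>" by simp
    finally show ?thesis using w by simp
  qed
  have "\<zero> \<in> internal_sum R U n"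
  proof -
    have "(\<lambda>i. \<zero>) \<in> Pi {..<n} U" using U unfolding right_ideal_def
      using additive_subgroup.zero_closed by fastforce
    moreover have "finsum R (\<lambda>i. \<zero>) {..<n} = \<zero>" by simp
    ultimately show ?thesis unfolding internal_sum_def by (auto intro!: exI[of _ "\<lambda>i. \<zero>"])
  qed
  then have "X \<inter> internal_sum R U n = {\<zero>}" using all0 by auto
  then show False using ne by simp
qed

lemma main_abstract:
  assumes H: "\<forall>J. ideal J R \<longrightarrow> centrally_s_unital R (lann R J)"
    and fud: "finite_right_uniform_dimension R"
  shows "quasi_Baer R"
  unfolding quasi_Baer_def
proof (intro allI impI)
  fix I assume I: "ideal I R"
  interpret II: ideal I R by fact
  obtain n U where Uu: "\<forall>i<n. uniform_right_ideal R (U i)"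
    and E: "essential_right_ideal R (internal_sum R U n)"
    using fud unfolding finite_right_uniform_dimension_def by blast
  have Ur: "\<forall>i<n. right_ideal R (U i)" using Uu unfolding uniform_right_ideal_def by blast
  have Unz: "\<forall>i<n. U i \<noteq> {\<zero>}" using Uu unfolding uniform_right_ideal_def by blast
  have Uun: "\<And>i A B. i < n \<Longrightarrow> right_ideal R A \<Longrightarrow> right_ideal R B \<Longrightarrow> A \<subseteq> U i \<Longrightarrow> B \<subseteq> U i
      \<Longrightarrow> A \<noteq> {\<zero>} \<Longrightarrow> B \<noteq> {\<zero>} \<Longrightarrow> A \<inter> B \<noteq> {\<zero>}"
    using Uu unfolding uniform_right_ideal_def by blast
  have Uc: "U i \<subseteq> carrier R" if "i < n" for i
    using Ur that unfolding right_ideal_def using additive_subgroup.a_subset by blast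
  have U0: "\<zero> \<in> U i" if "i < n" for i
    using Ur that unfolding right_ideal_def using additive_subgroup.zero_closed by blast
  have Urc: "x \<otimes> s \<in> U i" if "i < n" "x \<in> U i" "s \<in> carrier R" for i x s
    using Ur that unfolding right_ideal_def by blast
  define K where "K = r_ann R I"
  have K: "ideal K R" unfolding K_def by (rule r_ann_ideal[OF I])
  define L where "L = lann R K"
  have csL: "centrally_s_unital R L" using H K unfolding L_def by blast
  interpret IL: ideal L R by (rule cs_ideal[OF csL])
  define P where "P i \<longleftrightarrow> (\<exists>x. x \<in> U i \<inter> L \<and> x \<noteq> \<zero>)" for i
  define a where "a i = (if P i then (SOME x. x \<in> U i \<inter> L \<and> x \<noteq> \<zero>) else (SOME x. x \<in> U i \<and> x \<noteq> \<zero>))" for i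
  have a_prop: "a i \<in> U i \<and> a i \<noteq> \<zero> \<and> (P i \<longrightarrow> a i \<in> L)" if i: "i < n" for i
  proof (cases "P i")
    case True
    then have "\<exists>x. x \<in> U i \<inter> L \<and> x \<noteq> \<zero>" unfolding P_def .
    from someI_ex[OF this] True show ?thesis unfolding a_def by simp
  next
    case False
    have "\<exists>x. x \<in> U i \<and> x \<noteq> \<zero>" using Unz i U0[OF i] by blast
    from someI_ex[OF this] False show ?thesis unfolding a_def by simp
  qed
  have ac: "a i \<in> carrier R" if "i < n" for i using a_prop[OF that] Uc[OF that] by auto
  obtain z where z: "z \<in> L" "central R z" and za: "\<forall>x\<in>a ` {i. i < n \<and> P i}. x \<otimes> z = x"
    using cs_finite[OF csL, of "a ` {i. i < n \<and> P i}"] a_prop by auto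
  have zc: "z \<in> carrier R" using z central_carrier by auto
  have key: "y \<otimes> z = y" if y: "y \<in> L" for y
  proof -
    have yc: "y \<in> carrier R" using y IL.Icarr by auto
    define v where "v = y \<ominus> y \<otimes> z"
    have vL: "v \<in> L" unfolding v_def minus_eq using y z zc IL.I_r_closed by auto
    obtain w where w: "w \<in> L" "central R w" "v \<otimes> w = v" using cs_unit[OF csL vL] by blast
    have wc: "w \<in> carrier R" using w central_carrier by auto
    define d where "d = w \<ominus> w \<otimes> z"
    have dL: "d \<in> L" unfolding d_def minus_eq using w zc IL.I_r_closed by auto
    have dcen: "central R d" unfolding d_def using w z central_minus central_mult by auto
    have dc: "d \<in> carrier R" using dcen central_carrier by auto
    have d_kill: "d \<otimes> a i = \<zero>" if i: "i < n" for i
    proof (cases "P i")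
      case True
      then have "a i \<otimes> z = a i" using za i by auto
      then have "z \<otimes> a i = a i" using central_comm[OF z(2) ac[OF i]] by simp
      then have "d \<otimes> a i = w \<otimes> a i \<ominus> w \<otimes> a i"
        unfolding d_def using wc zc ac[OF i] by (simp add: l_diff m_assoc)
      then show ?thesis using wc ac[OF i] by (simp add: diff_self)
    next
      case False
      have "d \<otimes> a i = a i \<otimes> d" using central_comm[OF dcen ac[OF i]] .
      moreover have "a i \<otimes> d \<in> U i" using Urc[OF i _ dc] a_prop[OF i] by auto
      moreover have "a i \<otimes> d \<in> L" using IL.I_l_closed[OF dL ac[OF i]] .
      ultimately show ?thesis using False unfolding P_def by auto
    qed
    define D where "D = {d \<otimes> s | s. s \<in> carrier R}"
    have D: "ideal D R" unfolding D_def by (rule central_principal_ideal[OF dcen])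
    define B where "B = lann R D"
    have csB: "centrally_s_unital R B" using H D unfolding B_def by blast
    interpret IB: ideal B R by (rule cs_ideal[OF csB])
    define X where "X = lann R B"
    have csX: "centrally_s_unital R X" using H IB.ideal_axioms unfolding X_def by blast
    interpret IX: ideal X R by (rule cs_ideal[OF csX])
    have dX: "d \<in> X"
    proof -
      have "d \<otimes> b = \<zero>" if b: "b \<in> B" for b
      proof -
        have bc: "b \<in> carrier R" using b IB.Icarr by auto
        have "d \<otimes> \<one> \<in> D" unfolding D_def by blast
        then have "b \<otimes> (d \<otimes> \<one>) = \<zero>" using b unfolding B_def lann_def by blast
        then show ?thesis using central_comm[OF dcen bc] dc by simp
      qed
      then show ?thesis unfolding X_def lann_def using dc by blast
    qed
    have aB: "a i \<in> B" if i: "i < n" for i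
    proof -
      have "a i \<otimes> x = \<zero>" if x: "x \<in> D" for x
      proof -
        have "\<exists>s. s \<in> carrier R \<and> x = d \<otimes> s" using x unfolding D_def apply simp
          apply (elim exE conjE) apply (rule exI, rule conjI, assumption) apply assumption done
        then obtain s where s: "s \<in> carrier R" "x = d \<otimes> s" by blast
        have "a i \<otimes> x = (a i \<otimes> d) \<otimes> s" using s ac[OF i] dc by (simp add: m_assoc)
        also have "\<dots> = (d \<otimes> a i) \<otimes> s" using central_comm[OF dcen ac[OF i]] by simp
        also have "\<dots> = \<zero>" using d_kill[OF i] s by simp
        finally show ?thesis .
      qed
      then show ?thesis unfolding B_def lann_def using ac[OF i] by blast
    qed
    have disj: "\<forall>i<n. X \<inter> U i \<subseteq> {\<zero>}"
    proof (intro allI impI subsetI)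
      fix i x assume i: "i < n" and x: "x \<in> X \<inter> U i"
      have xc: "x \<in> carrier R" using x IX.Icarr by auto
      show "x \<in> {\<zero>}"
      proof (rule ccontr)
        assume xnz: "x \<notin> {\<zero>}"
        let ?A = "{x \<otimes> s | s. s \<in> carrier R}"
        let ?B = "{a i \<otimes> s | s. s \<in> carrier R}"
        have rA: "right_ideal R ?A" by (rule principal_right_ideal[OF xc])
        have rB: "right_ideal R ?B" by (rule principal_right_ideal[OF ac[OF i]])
        have AU: "?A \<subseteq> U i" using Urc[OF i] x by auto
        have BU: "?B \<subseteq> U i" using Urc[OF i] a_prop[OF i] by auto
        have "x \<otimes> \<one> \<in> ?A" by blast
        then have Anz: "?A \<noteq> {\<zero>}" using xnz xc by auto
        have "a i \<otimes> \<one> \<in> ?B" by blast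
        then have Bnz: "?B \<noteq> {\<zero>}" using a_prop[OF i] ac[OF i] by auto
        have ne: "?A \<inter> ?B \<noteq> {\<zero>}" using Uun[OF i rA rB AU BU Anz Bnz] .
        have "y = \<zero>" if y: "y \<in> ?A \<inter> ?B" for y
        proof -
          have yA': "y \<in> ?A" and yB': "y \<in> ?B" using y by blast+
          have "\<exists>s. s \<in> carrier R \<and> y = x \<otimes> s" using yA' apply simp
            apply (elim exE conjE) apply (rule exI, rule conjI, assumption) apply assumption done
          then obtain s where s: "s \<in> carrier R" "y = x \<otimes> s" by blast
          have "\<exists>s. s \<in> carrier R \<and> y = a i \<otimes> s" using yB' apply simp
            apply (elim exE conjE) apply (rule exI, rule conjI, assumption) apply assumption done
          then obtain t where t: "t \<in> carrier R" "y = a i \<otimes> t" by blast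
          have yX: "y \<in> X" using IX.I_r_closed[of x s] x s by auto
          have yB: "y \<in> B" using IB.I_r_closed[OF aB[OF i] t(1)] t by auto
          show ?thesis using cs_lann_disj[OF csB yB] yX unfolding X_def by blast
        qed
        moreover have "\<zero> \<in> ?A \<inter> ?B"
        proof -
          have "x \<otimes> \<zero> \<in> ?A" "a i \<otimes> \<zero> \<in> ?B" by blast+
          then show ?thesis using xc ac[OF i] by simp
        qed
        ultimately have "?A \<inter> ?B = {\<zero>}" by blast
        then show False using ne by simp
      qed
    qed
    have "X \<subseteq> {\<zero>}" using kl[OF csX E Ur disj] .
    then have d0: "d = \<zero>" using dX by auto
    have "v = v \<otimes> w" using w by simp
    also have "\<dots> = y \<otimes> w \<ominus> y \<otimes> (z \<otimes> w)" unfolding v_def using yc zc wc by (simp add: l_diff m_assoc)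
    also have "\<dots> = y \<otimes> w \<ominus> y \<otimes> (w \<otimes> z)" using central_comm[OF z(2) wc] by simp
    also have "\<dots> = y \<otimes> d" unfolding d_def using yc zc wc by (simp add: r_diff)
    also have "\<dots> = \<zero>" using d0 yc by simp
    finally have "v = \<zero>" .
    then have "y \<otimes> z \<oplus> \<zero> = y" using add_diff_cancel'[of y "y \<otimes> z"] yc zc unfolding v_def by simp
    then show ?thesis using yc zc by simp
  qed
  have zz: "z \<otimes> z = z" using key[OF z(1)] .
  define e where "e = \<one> \<ominus> z"
  have ec: "e \<in> carrier R" unfolding e_def using zc by simp
  have ze: "z \<otimes> e = \<zero>" unfolding e_def using zc zz by (simp add: r_diff diff_self)
  have ee: "e \<otimes> e = e"
  proof -
    have "e \<otimes> e = \<one> \<otimes> e \<ominus> z \<otimes> e" unfolding e_def using zc by (simp add: l_diff)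
    also have "\<dots> = e" using ze ec by (simp add: minus_eq)
    finally show ?thesis .
  qed
  have IL: "b \<in> L" if b: "b \<in> I" for b
    using b II.Icarr unfolding L_def lann_def K_def r_ann_def by auto
  have "r_ann R I = {e \<otimes> s | s. s \<in> carrier R}"
  proof
    show "r_ann R I \<subseteq> {e \<otimes> s | s. s \<in> carrier R}"
    proof
      fix k assume k: "k \<in> r_ann R I"
      have kc: "k \<in> carrier R" using k unfolding r_ann_def by auto
      have "z \<otimes> k = \<zero>" using z(1) k unfolding L_def lann_def K_def by blast
      then have "e \<otimes> k = k" unfolding e_def using zc kc by (simp add: l_diff) (simp add: minus_eq)
      then show "k \<in> {e \<otimes> s | s. s \<in> carrier R}" using kc by (auto intro!: exI[of _ k])
    qed
    show "{e \<otimes> s | s. s \<in> carrier R} \<subseteq> r_ann R I"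
    proof
      fix x assume "x \<in> {e \<otimes> s | s. s \<in> carrier R}"
      then have "\<exists>s. s \<in> carrier R \<and> x = e \<otimes> s" apply simp
        apply (elim exE conjE) apply (rule exI, rule conjI, assumption) apply assumption done
      then obtain s where s: "s \<in> carrier R" "x = e \<otimes> s" by blast
      have "b \<otimes> x = \<zero>" if b: "b \<in> I" for b
      proof -
        have bc: "b \<in> carrier R" using b II.Icarr by auto
        have "b \<otimes> z = b" using key[OF IL[OF b]] .
        then have "b \<otimes> e = \<zero>" unfolding e_def using bc zc by (simp add: r_diff diff_self)
        then show ?thesis using s bc ec by (simp add: m_assoc[symmetric])
      qed
      then show "x \<in> r_ann R I" unfolding r_ann_def using s ec by auto
    qed
  qed
  then show "\<exists>e\<in>carrier R. e \<otimes> e = e \<and> r_ann R I = {e \<otimes> s | s. s \<in> carrier R}"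
    using ec ee by blast
qed

end


lemma mod_zero: "right_module act \<Longrightarrow> act 0 r = 0"
proof -
  assume m: "right_module act"
  have "act (0 + 0) r = act 0 r + act 0 r" using m unfolding right_module_def by blast
  then have "act 0 r + act 0 r = act 0 r + 0" by simp
  then show ?thesis by (rule add_left_imp_eq)
qed

lemma mod_neg: "right_module act \<Longrightarrow> act (- x) r = - act x r"
proof -
  assume m: "right_module act"
  have "act (x + - x) r = act x r + act (- x) r" using m unfolding right_module_def by blast
  then have "act x r + act (- x) r = act (x + - x) r" by simp
  also have "\<dots> = 0" using mod_zero[OF m] by simp
  finally show ?thesis by (simp add: add_eq_0_iff)
qed

lemma End_zero: "f \<in> End_set act \<Longrightarrow> f 0 = 0"
proof -
  assume f: "f \<in> End_set act"
  have "f (0 + 0) = f 0 + f 0" using f unfolding End_set_def by blast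
  then have "f 0 + f 0 = f 0 + 0" by simp
  then show ?thesis by (rule add_left_imp_eq)
qed

lemma End_add: "f \<in> End_set act \<Longrightarrow> f (x + y) = f x + f y"
  unfolding End_set_def by blast

lemma End_act: "f \<in> End_set act \<Longrightarrow> f (act x r) = act (f x) r"
  unfolding End_set_def by blast

lemma End_neg: "f \<in> End_set act \<Longrightarrow> f (- x) = - f x"
proof -
  assume f: "f \<in> End_set act"
  have "f x + f (- x) = 0" using End_add[OF f, of x "- x"] End_zero[OF f] by simp
  then show ?thesis by (simp add: add_eq_0_iff)
qed

lemma End_ring_ring:
  assumes m: "right_module act"
  shows "ring (End_ring act)"
proof (rule ringI)
  have cE: "carrier (End_ring act) = End_set act" unfolding End_ring_def by simp
  have addE: "f \<oplus>\<^bsub>End_ring act\<^esub> g = (\<lambda>x. f x + g x)" for f g unfolding End_ring_def by simp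
  have mulE: "f \<otimes>\<^bsub>End_ring act\<^esub> g = f \<circ> g" for f g unfolding End_ring_def by simp
  have zE: "\<zero>\<^bsub>End_ring act\<^esub> = (\<lambda>x. 0)" unfolding End_ring_def by simp
  have oE: "\<one>\<^bsub>End_ring act\<^esub> = id" unfolding End_ring_def by simp
  have ma: "act (x + y) r = act x r + act y r" for x y r using m unfolding right_module_def by blast
  have add_cl: "(\<lambda>x. f x + g x) \<in> End_set act" if "f \<in> End_set act" "g \<in> End_set act" for f g
    using that unfolding End_set_def by (auto simp: ma add_ac)
  have zero_cl: "(\<lambda>x. 0) \<in> End_set act" unfolding End_set_def by (simp add: mod_zero[OF m])
  have neg_cl: "(\<lambda>x. - f x) \<in> End_set act" if "f \<in> End_set act" for f
    using that unfolding End_set_def by (auto simp: mod_neg[OF m])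
  have comp_cl: "f \<circ> g \<in> End_set act" if "f \<in> End_set act" "g \<in> End_set act" for f g
    using that unfolding End_set_def by auto
  show "abelian_group (End_ring act)"
  proof (rule abelian_groupI)
    show "\<exists>y\<in>carrier (End_ring act). y \<oplus>\<^bsub>End_ring act\<^esub> x = \<zero>\<^bsub>End_ring act\<^esub>"
      if "x \<in> carrier (End_ring act)" for x
      using that neg_cl[of x] unfolding cE addE zE by (auto intro!: bexI[of _ "\<lambda>m. - x m"])
  qed (auto simp: cE addE zE add_cl zero_cl add_ac)
  show "monoid (End_ring act)"
    by (rule monoidI) (auto simp: cE mulE oE comp_cl End_set_def)
  show "(x \<oplus>\<^bsub>End_ring act\<^esub> y) \<otimes>\<^bsub>End_ring act\<^esub> z = x \<otimes>\<^bsub>End_ring act\<^esub> z \<oplus>\<^bsub>End_ring act\<^esub> y \<otimes>\<^bsub>End_ring act\<^esub> z"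
    for x y z by (auto simp: addE mulE)
  show "z \<otimes>\<^bsub>End_ring act\<^esub> (x \<oplus>\<^bsub>End_ring act\<^esub> y) = z \<otimes>\<^bsub>End_ring act\<^esub> x \<oplus>\<^bsub>End_ring act\<^esub> z \<otimes>\<^bsub>End_ring act\<^esub> y"
    if "z \<in> carrier (End_ring act)" for x y z
    using that by (auto simp: addE mulE cE End_add)
qed

lemma transfer:
  assumes m: "right_module act" and aip: "centrally_endo_AIP act"
    and J: "ideal J (End_ring act)"
  shows "centrally_s_unital (End_ring act) (lann (End_ring act) J)"
proof -
  interpret IJ: ideal J "End_ring act" by fact
  have cE: "carrier (End_ring act) = End_set act" unfolding End_ring_def by simp
  have mulE: "f \<otimes>\<^bsub>End_ring act\<^esub> g = f \<circ> g" for f g unfolding End_ring_def by simp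
  have zE: "\<zero>\<^bsub>End_ring act\<^esub> = (\<lambda>x. 0)" unfolding End_ring_def by simp
  have Jc: "J \<subseteq> End_set act" using IJ.a_subset cE by simp
  define LJ where "LJ = lann (End_ring act) J"
  have LJ_iff: "\<psi> \<in> LJ \<longleftrightarrow> \<psi> \<in> End_set act \<and> (\<forall>b\<in>J. \<forall>x. \<psi> (b x) = 0)" for \<psi>
    unfolding LJ_def lann_def cE mulE zE by (auto simp: fun_eq_iff)
  define N where "N = {x. \<forall>\<psi>\<in>LJ. \<psi> x = 0}"
  have fi: "fully_invariant act N"
    unfolding fully_invariant_def submodule_of_def
  proof (intro conjI ballI allI)
    have LE: "\<psi> \<in> End_set act" if "\<psi> \<in> LJ" for \<psi> using that LJ_iff by blast
    show "0 \<in> N" unfolding N_def using LE End_zero by blast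
    show "x + y \<in> N" if "x \<in> N" "y \<in> N" for x y
      unfolding N_def
    proof (intro CollectI ballI)
      fix \<psi> assume p: "\<psi> \<in> LJ"
      have "\<psi> x = 0" "\<psi> y = 0" using that p unfolding N_def by blast+
      then show "\<psi> (x + y) = 0" using End_add[OF LE[OF p]] by simp
    qed
    show "- x \<in> N" if "x \<in> N" for x
      unfolding N_def
    proof (intro CollectI ballI)
      fix \<psi> assume p: "\<psi> \<in> LJ"
      have "\<psi> x = 0" using that p unfolding N_def by blast
      then show "\<psi> (- x) = 0" using End_neg[OF LE[OF p]] by simp
    qed
    show "act x r \<in> N" if "x \<in> N" for x r
      unfolding N_def
    proof (intro CollectI ballI)
      fix \<psi> assume p: "\<psi> \<in> LJ"
      have "\<psi> x = 0" using that p unfolding N_def by blast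
      then show "\<psi> (act x r) = 0" using End_act[OF LE[OF p]] mod_zero[OF m] by simp
    qed
    show "f x \<in> N" if f: "f \<in> End_set act" and x: "x \<in> N" for f x
      unfolding N_def
    proof (intro CollectI ballI)
      fix \<psi> assume psi: "\<psi> \<in> LJ"
      have "\<psi> \<circ> f \<in> LJ"
      proof -
        have "\<psi> \<circ> f \<in> End_set act" using psi f unfolding LJ_iff End_set_def by auto
        moreover have "(\<psi> \<circ> f) (b y) = 0" if b: "b \<in> J" for b y
        proof -
          have "f \<circ> b \<in> J" using IJ.I_l_closed[OF b, of f] f cE mulE by simp
          then have "\<psi> ((f \<circ> b) y) = 0" using psi unfolding LJ_iff by blast
          then show ?thesis by simp
        qed
        ultimately show ?thesis unfolding LJ_iff by blast
      qed
      then have "(\<psi> \<circ> f) x = 0" using x unfolding N_def by blast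
      then show "\<psi> (f x) = 0" by simp
    qed
  qed
  have "l_ann act N = LJ"
  proof
    show "LJ \<subseteq> l_ann act N" unfolding l_ann_def N_def using LJ_iff by blast
    show "l_ann act N \<subseteq> LJ"
    proof
      fix \<phi> assume phi: "\<phi> \<in> l_ann act N"
      have "b x \<in> N" if "b \<in> J" for b x unfolding N_def using LJ_iff that by blast
      then show "\<phi> \<in> LJ" using phi unfolding l_ann_def LJ_iff by blast
    qed
  qed
  moreover have "centrally_s_unital (End_ring act) (l_ann act N)" using aip fi unfolding centrally_endo_AIP_def by blast
  ultimately show ?thesis unfolding LJ_def by simp
qed

theorem proposition3p6:
  fixes act :: "'m::ab_group_add \<Rightarrow> 'r::ring_1 \<Rightarrow> 'm"
  assumes "right_module act"
    and "centrally_endo_AIP act"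
    and "finite_right_uniform_dimension (End_ring act)"
  shows "quasi_Baer (End_ring act)"
proof -
  interpret RR: ring "End_ring act" by (rule End_ring_ring[OF assms(1)])
  show ?thesis
    using RR.main_abstract transfer[OF assms(1,2)] assms(3) by blast
qed

end
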